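(* Let $V$ be a finite set of nails, let $g_1, g_2$ be specifications on $V$, and let $h_1, h_2 \in F(V)$ be words with $h_1$ solving $g_1$ and $h_2$ solving $g_2$ (the supports of $h_1,h_2$ may overlap). Suppose that for every $S \subseteq V$ with $g_1(S) = g_2(S) = \mathsf{hang}$ there exists $S'$ with $S \subseteq S' \subseteq V$ and $g_1(S') \ne g_2(S')$. Then $h_1 + h_2$ solves $g_1 \wedge g_2$, and $[h_1,h_2] = h_1 + h_2 - h_1 - h_2$ solves $g_1 \vee g_2$. Moreover, the hypothesis holds automatically when $V = V_1 \sqcup V_2$ and $g_i(S) = f_i(S \cap V_i)$ for specifications $f_i$ on $V_i$ ($i=1,2$).
   Context: Words are elements of the free group $F(V)$ on a finite set $V$ of nails, written additively ($+$ group operation, $-$ inverse, $0$ identity). For $S \subseteq V$, $h|_S$ is the image of $h$ under the homomorphism killing the generators in $S$. A specification on $V$ is a monotone function $f: 2^V \to \{\mathsf{hang}, \mathsf{fall}\}$ with $f(V) = \mathsf{fall}$, where $\mathsf{hang} < \mathsf{fall}$ and monotone means $S \subseteq S' \Rightarrow f(S) \le f(S')$. A word $h$ solves $f$ if for every $S \subseteq V$: $h|_S = 0 \iff f(S) = \mathsf{fall}$. The operations $\vee$, $\wedge$ on specifications are pointwise $\max$, $\min$ with respect to $\mathsf{hang} < \mathsf{fall}$. *)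

theory Defs
  imports Main
begin

text \<open>A letter (True, v) is the generator v, (False, v) is its inverse.
  An element of F(V) is represented by any word over V; two words represent the
  same group element iff they have the same free reduction.\<close>

type_synonym 'a fword = "(bool \<times> 'a) list"

definition fg_inv_letter :: "bool \<times> 'a \<Rightarrow> bool \<times> 'a" where
  "fg_inv_letter x = (\<not> fst x, snd x)"

definition fg_reduce :: "'a fword \<Rightarrow> 'a fword" where
  "fg_reduce w = foldr (\<lambda>x acc. case acc of
       [] \<Rightarrow> [x]
     | y # ys \<Rightarrow> (if y = fg_inv_letter x then ys else x # acc)) w []"

definition fg_is_zero :: "'a fword \<Rightarrow> bool" where
  "fg_is_zero w \<longleftrightarrow> fg_reduce w = []"

definition fg_plus :: "'a fword \<Rightarrow> 'a fword \<Rightarrow> 'a fword" where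
  "fg_plus u w = u @ w"

definition fg_neg :: "'a fword \<Rightarrow> 'a fword" where
  "fg_neg w = rev (map fg_inv_letter w)"

definition fg_comm :: "'a fword \<Rightarrow> 'a fword \<Rightarrow> 'a fword" where
  "fg_comm u w = fg_plus (fg_plus (fg_plus u w) (fg_neg u)) (fg_neg w)"

text \<open>h|_S: image under the homomorphism killing the generators in S.\<close>
definition fg_kill :: "'a set \<Rightarrow> 'a fword \<Rightarrow> 'a fword" where
  "fg_kill S w = filter (\<lambda>x. snd x \<notin> S) w"

definition fg_word_on :: "'a set \<Rightarrow> 'a fword \<Rightarrow> bool" where
  "fg_word_on V w \<longleftrightarrow> snd ` set w \<subseteq> V"

datatype outcome = hang | fall

definition outcome_le :: "outcome \<Rightarrow> outcome \<Rightarrow> bool" where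
  "outcome_le x y \<longleftrightarrow> x = hang \<or> y = fall"

definition is_spec :: "'a set \<Rightarrow> ('a set \<Rightarrow> outcome) \<Rightarrow> bool" where
  "is_spec V f \<longleftrightarrow>
     (\<forall>S S'. S \<subseteq> S' \<and> S' \<subseteq> V \<longrightarrow> outcome_le (f S) (f S')) \<and> f V = fall"

text \<open>Pointwise max (\<or>) and min (\<and>) w.r.t. hang < fall.\<close>
definition spec_or :: "('a set \<Rightarrow> outcome) \<Rightarrow> ('a set \<Rightarrow> outcome) \<Rightarrow> 'a set \<Rightarrow> outcome" where
  "spec_or f g S = (if f S = fall \<or> g S = fall then fall else hang)"

definition spec_and :: "('a set \<Rightarrow> outcome) \<Rightarrow> ('a set \<Rightarrow> outcome) \<Rightarrow> 'a set \<Rightarrow> outcome" where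
  "spec_and f g S = (if f S = fall \<and> g S = fall then fall else hang)"

definition solves :: "'a set \<Rightarrow> 'a fword \<Rightarrow> ('a set \<Rightarrow> outcome) \<Rightarrow> bool" where
  "solves V h f \<longleftrightarrow> fg_word_on V h \<and>
     (\<forall>S. S \<subseteq> V \<longrightarrow> (fg_is_zero (fg_kill S h) \<longleftrightarrow> f S = fall))"

end

theory Submission
  imports Defs
begin

abbreviation "red \<equiv> fg_reduce"
abbreviation "iv \<equiv> fg_inv_letter"
abbreviation "ng \<equiv> fg_neg"

lemma iv_iv[simp]: "iv (iv x) = x" by (simp add: fg_inv_letter_def)
lemma iv_neq[simp]: "iv x \<noteq> x" "x \<noteq> iv x" by (auto simp: fg_inv_letter_def prod_eq_iff)
lemma iv_eq_iff: "(iv x = y) = (x = iv y)" by (auto simp: fg_inv_letter_def)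
lemma snd_iv[simp]: "snd (iv x) = snd x" by (simp add: fg_inv_letter_def)

definition stp :: "bool \<times> 'a \<Rightarrow> 'a fword \<Rightarrow> 'a fword" where
  "stp x acc = (case acc of [] \<Rightarrow> [x] | y # ys \<Rightarrow> (if y = iv x then ys else x # acc))"

lemma red_Nil[simp]: "red [] = []" by (simp add: fg_reduce_def)
lemma red_Cons: "red (x # w) = stp x (red w)" by (simp add: fg_reduce_def stp_def)

fun reduced :: "'a fword \<Rightarrow> bool" where
  "reduced (a # b # w) = (b \<noteq> iv a \<and> reduced (b # w))"
| "reduced _ = True"

lemma reduced_Cons: "reduced (a # w) = (reduced w \<and> (w \<noteq> [] \<longrightarrow> hd w \<noteq> iv a))"
  by (cases w) auto

lemma reduced_append: "reduced (u @ v) = (reduced u \<and> reduced v \<and> (u \<noteq> [] \<longrightarrow> v \<noteq> [] \<longrightarrow> hd v \<noteq> iv (last u)))"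
  by (induction u) (auto simp: reduced_Cons)

lemma reduced_stp: "reduced r \<Longrightarrow> reduced (stp x r)"
  by (cases r) (auto simp: stp_def reduced_Cons)

lemma reduced_red: "reduced (red w)"
  by (induction w) (auto simp: red_Cons reduced_stp)

lemma red_reduced: "reduced w \<Longrightarrow> red w = w"
  by (induction w) (auto simp: red_Cons reduced_Cons stp_def split: list.splits)

lemma red_red[simp]: "red (red w) = red w" by (simp add: red_reduced reduced_red)

lemma red_append_red: "red (u @ red v) = red (u @ v)"
  by (induction u) (auto simp: red_Cons)

lemma red_cancel0: "red (iv x # x # w) = red w"
proof -
  have r: "reduced (red w)" by (rule reduced_red)
  show ?thesis
  proof (cases "\<exists>r'. red w = iv x # r'")
    case True
    then obtain r' where e: "red w = iv x # r'" by auto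
    with r have "reduced r'" "r' \<noteq> [] \<longrightarrow> hd r' \<noteq> x" by (auto simp: reduced_Cons)
    then show ?thesis using e by (cases r') (auto simp: red_Cons stp_def)
  next
    case False
    show ?thesis
    proof (cases "red w")
      case Nil
      then show ?thesis by (simp add: red_Cons stp_def)
    next
      case (Cons a r)
      with False have "a \<noteq> iv x" by auto
      then have "stp x (red w) = x # red w" using Cons by (simp add: stp_def)
      then show ?thesis by (simp add: red_Cons stp_def)
    qed
  qed
qed

lemma red_cancel1: "red (x # iv x # w) = red w"
  using red_cancel0[of "iv x" w] by simp

lemma red_stp_app: "reduced r \<Longrightarrow> red (stp a r @ v) = red (a # r @ v)"
  by (cases r) (auto simp: stp_def red_cancel1)

lemma red_red_append: "red (red u @ v) = red (u @ v)"
proof (induction u)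
  case (Cons a u)
  have "red (red (a # u) @ v) = red (stp a (red u) @ v)" by (simp add: red_Cons)
  also have "\<dots> = red (a # red u @ v)" by (rule red_stp_app[OF reduced_red])
  also have "\<dots> = stp a (red (red u @ v))" by (simp add: red_Cons)
  also have "\<dots> = red (a # u @ v)" using Cons by (simp add: red_Cons)
  finally show ?case by simp
qed simp

lemma red_cong: "red v = red v' \<Longrightarrow> red (u @ v @ w) = red (u @ v' @ w)"
proof -
  assume "red v = red v'"
  then have "red (v @ w) = red (v' @ w)" by (metis red_red_append)
  then show ?thesis by (metis red_append_red)
qed

lemma red_cancel_mid: "red (u @ a # iv a # w) = red (u @ w)"
  using red_cong[of "[a, iv a]" "[]" u w] by (simp add: red_cancel1)

lemma red_cancel_mid': "red (u @ iv a # a # w) = red (u @ w)"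
  using red_cancel_mid[of u "iv a" w] by simp

lemma ng_Nil[simp]: "ng [] = []" by (simp add: fg_neg_def)
lemma ng_Cons[simp]: "ng (a # w) = ng w @ [iv a]" by (simp add: fg_neg_def)
lemma ng_append[simp]: "ng (u @ v) = ng v @ ng u" by (simp add: fg_neg_def)
lemma ng_ng[simp]: "ng (ng w) = w" by (simp add: fg_neg_def rev_map comp_def)
lemma length_ng[simp]: "length (ng w) = length w" by (simp add: fg_neg_def)

lemma red_cancel_ng: "red (u @ v @ ng v @ w) = red (u @ w)"
proof (induction v arbitrary: u w)
  case (Cons a v)
  have "red (u @ (a # v) @ ng (a # v) @ w) = red ((u @ [a]) @ v @ ng v @ (iv a # w))" by simp
  also have "\<dots> = red ((u @ [a]) @ iv a # w)" by (rule Cons)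
  also have "\<dots> = red (u @ w)" using red_cancel_mid[of u a w] by simp
  finally show ?case .
qed simp

lemma red_cancel_ng': "red (u @ ng v @ v @ w) = red (u @ w)"
  using red_cancel_ng[of u "ng v" w] by simp


abbreviation "kl \<equiv> fg_kill"

lemma kl_Nil[simp]: "kl T [] = []" by (simp add: fg_kill_def)
lemma kl_append[simp]: "kl T (u @ v) = kl T u @ kl T v" by (simp add: fg_kill_def)
lemma kl_Cons: "kl T (a # v) = (if snd a \<in> T then kl T v else a # kl T v)" by (simp add: fg_kill_def)
lemma kl_ng[simp]: "kl T (ng w) = ng (kl T w)"
  by (induction w) (auto simp: kl_Cons)
lemma kl_kl: "S \<subseteq> S' \<Longrightarrow> kl S' (kl S w) = kl S' w"
proof -
  assume "S \<subseteq> S'"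
  then show ?thesis unfolding fg_kill_def filter_filter by (intro filter_cong) auto
qed

lemma red_kl_stp: "reduced r \<Longrightarrow> red (kl T (stp a r)) = red (kl T (a # r))"
proof (cases "\<exists>r'. r = iv a # r'")
  case True
  then obtain r' where e: "r = iv a # r'" by auto
  then have "stp a r = r'" by (simp add: stp_def)
  then show ?thesis using e by (auto simp: kl_Cons red_cancel1)
next
  case False
  then have "stp a r = a # r" by (cases r) (auto simp: stp_def)
  then show ?thesis by simp
qed

lemma red_kl: "red (kl T (red w)) = red (kl T w)"
proof (induction w)
  case (Cons a w)
  have "red (kl T (red (a # w))) = red (kl T (a # red w))"
    by (simp add: red_Cons red_kl_stp reduced_red)
  also have "\<dots> = red (kl T (a # w))"
    using Cons by (simp add: kl_Cons red_Cons)
  finally show ?case .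
qed simp

lemma red_kl_cong: "red u = red v \<Longrightarrow> red (kl T u) = red (kl T v)"
  by (metis red_kl)

lemma cancel_decomp:
  assumes "reduced x" "reduced y"
  shows "\<exists>p s q. x = p @ s \<and> y = ng s @ q \<and> red (x @ y) = p @ q"
  using assms(1)
proof (induction x)
  case Nil
  then show ?case using red_reduced[OF assms(2)] by auto
next
  case (Cons a x)
  then have rx: "reduced x" and hx: "x \<noteq> [] \<Longrightarrow> hd x \<noteq> iv a" by (auto simp: reduced_Cons)
  from Cons.IH[OF rx] obtain p s q where e: "x = p @ s" "y = ng s @ q" "red (x @ y) = p @ q" by auto
  have r: "red ((a # x) @ y) = stp a (p @ q)" using e by (simp add: red_Cons)
  show ?case
  proof (cases p)
    case (Cons b p')
    then have "b \<noteq> iv a" using hx e by auto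
    then have "stp a (p @ q) = a # p @ q" using Cons by (simp add: stp_def)
    then show ?thesis using r e by (rule_tac x="a # p" in exI) auto
  next
    case Nil
    show ?thesis
    proof (cases "\<exists>q'. q = iv a # q'")
      case True
      then obtain q' where "q = iv a # q'" by auto
      then show ?thesis using r e Nil by (rule_tac x="[]" in exI, rule_tac x="a # s" in exI) (auto simp: stp_def)
    next
      case False
      then have "stp a q = a # q" by (cases q) (auto simp: stp_def)
      then show ?thesis using r e Nil by (rule_tac x="[a]" in exI) auto
    qed
  qed
qed

definition pw :: "'a fword \<Rightarrow> nat \<Rightarrow> 'a fword" where
  "pw c n = concat (replicate n c)"

definition zp :: "'a fword \<Rightarrow> int \<Rightarrow> 'a fword" where
  "zp c i = (if i \<ge> 0 then pw c (nat i) else pw (ng c) (nat (- i)))"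

lemma pw_0[simp]: "pw c 0 = []" by (simp add: pw_def)
lemma pw_Suc: "pw c (Suc n) = c @ pw c n" by (simp add: pw_def)
lemma pw_add: "pw c (m + n) = pw c m @ pw c n" by (simp add: pw_def replicate_add)
lemma ng_pw: "ng (pw c n) = pw (ng c) n"
  by (induction n) (simp_all add: pw_Suc, metis pw_Suc append_Nil2 concat_replicate_trivial pw_def replicate_append_same concat_append concat.simps replicate_Suc)
lemma kl_pw: "kl T (pw c n) = pw (kl T c) n"
  by (induction n) (simp_all add: pw_Suc)
lemma kl_zp: "kl T (zp c i) = zp (kl T c) i"
  by (simp add: zp_def kl_pw)
lemma zp_0[simp]: "zp c 0 = []" by (simp add: zp_def)
lemma ng_zp: "ng (zp c i) = zp c (- i)"
  by (auto simp: zp_def ng_pw)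
lemma zp_ng: "zp (ng c) i = zp c (- i)"
  by (auto simp: zp_def)


lemma pw_ng_cancel: "red (pw d m @ pw (ng d) n) = red (zp d (int m - int n))"
proof (cases "n \<le> m")
  case True
  then have e: "pw d m = pw d (m - n) @ pw d n" by (metis le_add_diff_inverse2 pw_add)
  have "red (pw d m @ pw (ng d) n) = red (pw d (m - n) @ pw d n @ ng (pw d n) @ [])"
    by (simp add: e ng_pw)
  also have "\<dots> = red (pw d (m - n))" using red_cancel_ng[of "pw d (m-n)" "pw d n" "[]"] by simp
  moreover have "nat (int m - int n) = m - n" using True by simp
  ultimately show ?thesis using True by (simp add: zp_def)
next
  case False
  then have e: "pw (ng d) n = pw (ng d) m @ pw (ng d) (n - m)" by (metis le_add_diff_inverse nat_le_linear pw_add)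
  have "red (pw d m @ pw (ng d) n) = red ([] @ pw d m @ ng (pw d m) @ pw (ng d) (n - m))"
    by (simp add: e ng_pw)
  also have "\<dots> = red (pw (ng d) (n - m))" using red_cancel_ng[of "[]" "pw d m" "pw (ng d) (n - m)"] by simp
  finally show ?thesis using False by (simp add: zp_def nat_diff_distrib)
qed

lemma zp_add: "red (zp c i @ zp c j) = red (zp c (i + j))"
proof -
  consider "i \<ge> 0" "j \<ge> 0" | "i \<ge> 0" "j < 0" | "i < 0" "j \<ge> 0" | "i < 0" "j < 0" by linarith
  then show ?thesis
  proof cases
    case 1
    then show ?thesis by (simp add: zp_def pw_add[symmetric] nat_add_distrib)
  next
    case 2
    then show ?thesis using pw_ng_cancel[of c "nat i" "nat (-j)"] by (simp add: zp_def)
  next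
    case 3
    then show ?thesis using pw_ng_cancel[of "ng c" "nat (-i)" "nat j"] by (simp add: zp_def zp_ng add.commute)
  next
    case 4
    then have "nat (- i) + nat (- j) = nat (- (i + j))" by simp
    then show ?thesis using 4 by (simp add: zp_def pw_add[symmetric])
  qed
qed

definition cj :: "bool \<times> 'a \<Rightarrow> 'a fword \<Rightarrow> 'a fword" where
  "cj a c = a # c @ [iv a]"

lemma red_cj_cong: "red u = red v \<Longrightarrow> red (cj a u) = red (cj a v)"
  unfolding cj_def using red_cong[of u v "[a]" "[iv a]"] by simp

lemma red_uncj: "red (iv a # cj a u @ [a]) = red u"
proof -
  have "red (iv a # cj a u @ [a]) = red (u @ iv a # a # [])" by (simp add: cj_def red_cancel0)
  also have "\<dots> = red u" using red_cancel_mid'[of u a "[]"] by simp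
  finally show ?thesis .
qed

lemma red_cj_inj: "red (cj a u) = red (cj a v) \<Longrightarrow> red u = red v"
  by (metis red_uncj red_cong append_Cons append_Nil)

lemma ng_cj: "ng (cj a c) = cj a (ng c)" by (simp add: cj_def)

lemma cj_append: "red (cj a u @ cj a v) = red (cj a (u @ v))"
  unfolding cj_def using red_cancel_mid[of "a # u" "iv a" "v @ [iv a]"] by simp

lemma cj_pw: "red (pw (cj a c) n) = red (cj a (pw c n))"
proof (induction n)
  case 0
  then show ?case by (simp add: cj_def red_cancel1)
next
  case (Suc n)
  have "red (pw (cj a c) (Suc n)) = red (cj a c @ red (pw (cj a c) n))" by (simp add: pw_Suc red_append_red)
  also have "\<dots> = red (cj a c @ cj a (pw c n))" using Suc by (simp add: red_append_red)
  also have "\<dots> = red (cj a (pw c (Suc n)))" by (simp add: cj_append pw_Suc)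
  finally show ?case .
qed

lemma cj_zp: "red (zp (cj a c) i) = red (cj a (zp c i))"
  by (simp add: zp_def ng_cj cj_pw)

lemma torsion:
  "reduced d \<Longrightarrow> n > 0 \<Longrightarrow> red (pw d n) = [] \<Longrightarrow> d = []"
proof (induction "length d" arbitrary: d rule: less_induct)
  case less
  show ?case
  proof (rule ccontr)
    assume dne: "d \<noteq> []"
    show False
    proof (cases "hd d = iv (last d)")
      case False
      have "reduced (pw d m)" for m
      proof (induction m)
        case (Suc m)
        then show ?case using less.prems(1) False dne
          by (cases m) (auto simp: pw_Suc reduced_append hd_append iv_eq_iff)
      qed simp
      then have "red (pw d n) = pw d n" by (rule red_reduced)
      moreover have "pw d n \<noteq> []" using dne less.prems(2) by (cases n) (auto simp: pw_Suc)
      ultimately show False using less.prems(3) by simp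
    next
      case True
      have "length d \<noteq> 1"
      proof
        assume "length d = 1"
        then obtain b where "d = [b]" by (cases d) auto
        then show False using True by simp
      qed
      then obtain a d' where de: "d = cj a d'"
        using dne True unfolding cj_def
        by (metis append_butlast_last_id butlast.simps(2) iv_iv last_ConsL last_ConsR length_Cons
            list.collapse list.size(3) One_nat_def)
      then have rd': "reduced d'" using less.prems(1) by (simp add: cj_def reduced_append reduced_Cons)
      have "red (cj a (pw d' n)) = red (cj a [])"
        using cj_pw[of a d' n] less.prems(3) de by (simp add: cj_def red_cancel1)
      then have "red (pw d' n) = []" using red_cj_inj by fastforce
      then have "d' = []" using less.hyps[of d'] rd' less.prems(2) de by (simp add: cj_def)
      then show False using less.prems(1) de by (simp add: cj_def)
    qed
  qed
qed


lemma red_ng_cong: "red u = red v \<Longrightarrow> red (ng u) = red (ng v)"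
proof -
  assume e: "red u = red v"
  have "red (ng u) = red (ng u @ v @ ng v @ [])" using red_cancel_ng[of "ng u" v "[]"] by simp
  also have "\<dots> = red (ng u @ u @ ng v @ [])" using red_cong[of v u "ng u" "ng v @ []"] e by simp
  also have "\<dots> = red (ng v)" using red_cancel_ng'[of "[]" u "ng v @ []"] by simp
  finally show ?thesis .
qed

lemma hd_ng: "s \<noteq> [] \<Longrightarrow> hd (ng s) = iv (last s)"
  by (simp add: fg_neg_def hd_rev last_map)

lemma last_ng: "s \<noteq> [] \<Longrightarrow> last (ng s) = iv (hd s)"
  by (simp add: fg_neg_def last_rev hd_map)

lemma cj_shape: "length w \<ge> 2 \<Longrightarrow> last w = iv (hd w) \<Longrightarrow> w = cj (hd w) (butlast (tl w))"
proof -
  assume l: "length w \<ge> 2" and e: "last w = iv (hd w)"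
  obtain b u where w: "w = b # u" using l by (cases w) auto
  have une: "u \<noteq> []" using l w by auto
  have lu: "last u = iv b" using e w une by simp
  have "u = butlast u @ [last u]" using une by simp
  then have "u = butlast u @ [iv b]" using lu by simp
  then show ?thesis using w unfolding cj_def by simp
qed

lemma reduced_cj: "reduced (cj a w) \<Longrightarrow> reduced w"
  by (simp add: cj_def reduced_append reduced_Cons)

lemma zp_1: "zp c 1 = c" by (simp add: zp_def pw_def)

lemma comm_root:
  "reduced x \<Longrightarrow> reduced y \<Longrightarrow> red (x @ y) = red (y @ x) \<Longrightarrow>
   \<exists>c a b. red x = red (zp c a) \<and> red y = red (zp c b)"
proof (induction "length x + length y" arbitrary: x y rule: less_induct)
  case less
  note rx = less.prems(1) and ry = less.prems(2) and cm = less.prems(3)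
  show ?case
  proof (cases "x = [] \<or> y = []")
    case True
    then show ?thesis
    proof
      assume "x = []" then show ?thesis by (rule_tac x=y in exI, rule_tac x=0 in exI, rule_tac x=1 in exI) (simp add: zp_1)
    next
      assume "y = []" then show ?thesis by (rule_tac x=x in exI, rule_tac x=1 in exI, rule_tac x=0 in exI) (simp add: zp_1)
    qed
  next
    case False
    then have xne: "x \<noteq> []" and yne: "y \<noteq> []" by auto
    obtain p s q where d1: "x = p @ s" "y = ng s @ q" "red (x @ y) = p @ q"
      using cancel_decomp[OF rx ry] by blast
    obtain p2 t q2 where d2: "y = p2 @ t" "x = ng t @ q2" "red (y @ x) = p2 @ q2"
      using cancel_decomp[OF ry rx] by blast
    have pq: "p @ q = p2 @ q2" using d1 d2 cm by simp
    then have pq_len: "length p + length q = length p2 + length q2" by (metis length_append)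
    have L1: "length x = length p + length s" using d1(1) by simp
    have L2: "length y = length s + length q" using d1(2) by simp
    have L3: "length y = length p2 + length t" using d2(1) by simp
    have L4: "length x = length t + length q2" using d2(2) by simp
    have lst: "length s = length t" using L1 L2 L3 L4 pq_len by linarith
    show ?thesis
    proof (cases "s = []")
      case True
      then have "t = []" using lst by simp
      then have "x @ y = y @ x" using True d1 d2 cm by simp
      from comm_append_are_replicate[OF this] obtain m n zs where
        "concat (replicate m zs) = x" "concat (replicate n zs) = y" by blast
      then show ?thesis
        by (rule_tac x=zs in exI, rule_tac x="int m" in exI, rule_tac x="int n" in exI) (simp add: zp_def pw_def)
    next
      case sne: False
      show ?thesis
      proof (cases "p = []")
        case True
        have xs: "x = s" using True d1 by simp
        have rq: "reduced q" using d1(3) reduced_red[of "x @ y"] True by simp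
        have "red (x @ q) = red (x @ x @ y)" using d1(3) red_append_red[of x "x @ y"] True by simp
        moreover have "red (q @ x) = red (x @ x @ y)"
        proof -
          have "red (q @ x) = red (red (x @ y) @ x)" using d1(3) True by simp
          also have "\<dots> = red (x @ y @ x)" by (simp add: red_red_append)
          also have "\<dots> = red (x @ red (y @ x))" by (simp add: red_append_red)
          also have "\<dots> = red (x @ red (x @ y))" using cm by simp
          also have "\<dots> = red (x @ x @ y)" by (simp add: red_append_red)
          finally show ?thesis .
        qed
        ultimately have cq: "red (x @ q) = red (q @ x)" by simp
        have "length q < length y" using d1 sne by simp
        then obtain c a b where h: "red x = red (zp c a)" "red q = red (zp c b)"
          using less.hyps[of x q] rx rq cq by fastforce
        have "red y = red (ng x @ red (x @ y))"
          using red_cancel_ng'[of "[]" x "y"] by (simp add: red_append_red)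
        also have "\<dots> = red (ng x @ q)" using d1(3) True by simp
        also have "\<dots> = red (ng (zp c a) @ q)" using red_cong[of "ng x" "ng (zp c a)" "[]" q] red_ng_cong[OF h(1)] by simp
        also have "\<dots> = red (ng (zp c a) @ zp c b)" using red_cong[of q "zp c b" "ng (zp c a)" "[]"] h(2) by simp
        also have "\<dots> = red (zp c (b - a))" by (simp add: ng_zp zp_add)
        finally show ?thesis using h(1) by blast
      next
        case pne: False
        show ?thesis
        proof (cases "q = []")
          case True
          have rp: "reduced p" using d1(3) reduced_red[of "x @ y"] True by simp
          have "red (p @ y) = red (x @ y @ y)" using d1(3) True red_red_append[of "x @ y" y] by simp
          moreover have "red (y @ p) = red (x @ y @ y)"
          proof -
            have "red (y @ p) = red (y @ red (x @ y))" using d1(3) True by simp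
            also have "\<dots> = red (y @ x @ y)" by (simp add: red_append_red)
            also have "\<dots> = red (red (y @ x) @ y)" by (simp add: red_red_append)
            also have "\<dots> = red (red (x @ y) @ y)" using cm by simp
            also have "\<dots> = red (x @ y @ y)" by (simp add: red_red_append)
            finally show ?thesis .
          qed
          ultimately have cp: "red (p @ y) = red (y @ p)" by simp
          have "length p < length x" using d1 sne by simp
          then obtain c a b where h: "red p = red (zp c a)" "red y = red (zp c b)"
            using less.hyps[of p y] rp ry cp by fastforce
          have "red x = red (red (x @ y) @ ng y)"
            using red_cancel_ng[of x y "[]"] by (simp add: red_red_append)
          also have "\<dots> = red (p @ ng y)" using d1(3) True by simp
          also have "\<dots> = red (zp c a @ ng y)" using red_cong[of p "zp c a" "[]" "ng y"] h(1) by simp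
          also have "\<dots> = red (zp c a @ ng (zp c b))" using red_cong[of "ng y" "ng (zp c b)" "zp c a" "[]"] red_ng_cong[OF h(2)] by simp
          also have "\<dots> = red (zp c (a - b))" by (simp add: ng_zp zp_add)
          finally show ?thesis using h(2) by blast
        next
          case qne: False
          have tne: "t \<noteq> []" using sne lst by auto
          have "length p2 = length q" using L2 L3 lst by linarith
          then have p2ne: "p2 \<noteq> []" using qne by auto
          have "length q2 = length p" using L1 L4 lst by linarith
          then have q2ne: "q2 \<noteq> []" using pne by auto
          have h1: "hd x = hd y"
          proof -
            have "hd x = hd (p @ q)" using d1 pne by simp
            also have "\<dots> = hd (p2 @ q2)" using pq by simp
            also have "\<dots> = hd y" using d2 p2ne by simp
            finally show ?thesis .
          qed
          have h2: "last y = last x"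
          proof -
            have "last y = last (p @ q)" using d1 qne by simp
            also have "\<dots> = last (p2 @ q2)" using pq by simp
            also have "\<dots> = last x" using d2 q2ne by simp
            finally show ?thesis .
          qed
          have "ng s \<noteq> []" using sne by (simp add: fg_neg_def)
          then have h3: "hd y = iv (last x)" using d1 sne by (simp add: hd_ng)
          define a where "a = hd x"
          have lx: "last x = iv a" using h1 h3 a_def by simp
          have ly: "last y = iv a" using h2 lx by simp
          have hy: "hd y = a" using h1 a_def by simp
          have "length x \<ge> 2" using L1 pne sne by (simp add: Suc_le_eq[symmetric]) (metis One_nat_def Suc_leI add_mono length_greater_0_conv one_add_one)
          then have ex: "x = cj a (butlast (tl x))" using cj_shape[of x] lx a_def by simp
          have "length y \<ge> 2" using L2 qne sne by (simp add: Suc_le_eq[symmetric]) (metis One_nat_def Suc_leI add_mono length_greater_0_conv one_add_one)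
          then have ey: "y = cj a (butlast (tl y))" using cj_shape[of y] ly hy by simp
          define x' where "x' = butlast (tl x)"
          define y' where "y' = butlast (tl y)"
          have ex': "x = cj a x'" and ey': "y = cj a y'" using ex ey x'_def y'_def by auto
          have rx': "reduced x'" using rx ex' reduced_cj by metis
          have ry': "reduced y'" using ry ey' reduced_cj by metis
          have "red (cj a (x' @ y')) = red (cj a (y' @ x'))"
            using cm ex' ey' cj_append[of a x' y'] cj_append[of a y' x'] by simp
          then have cm': "red (x' @ y') = red (y' @ x')" by (rule red_cj_inj)
          have "length x' + length y' < length x + length y" using ex' ey' by (simp add: cj_def)
          then obtain c i j where h: "red x' = red (zp c i)" "red y' = red (zp c j)"
            using less.hyps[of x' y'] rx' ry' cm' by fastforce
          have "red x = red (zp (cj a c) i)" using ex' red_cj_cong[OF h(1)] cj_zp by metis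
          moreover have "red y = red (zp (cj a c) j)" using ey' red_cj_cong[OF h(2)] cj_zp by metis
          ultimately show ?thesis by blast
        qed
      qed
    qed
  qed
qed


lemma zero_ng: "red w = [] \<Longrightarrow> red (ng w) = []"
  using red_ng_cong[of w "[]"] by simp

lemma zero_app_iff: "red (x @ y) = [] \<Longrightarrow> (red x = [] \<longleftrightarrow> red y = [])"
proof
  assume "red (x @ y) = []" "red x = []"
  then show "red y = []" by (metis red_red_append append_Nil)
next
  assume a: "red (x @ y) = []" "red y = []"
  have "red x = red (x @ y @ ng y @ [])" using red_cancel_ng[of x y "[]"] by simp
  also have "\<dots> = red (red (x @ y) @ ng y)" by (simp add: red_red_append)
  also have "\<dots> = []" using a zero_ng by simp
  finally show "red x = []" .
qed

lemma zero_app: "red x = [] \<Longrightarrow> red y = [] \<Longrightarrow> red (x @ y) = []"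
  by (metis red_red_append append_Nil)

lemma comm_of_zero: "red (x @ y @ ng x @ ng y) = [] \<Longrightarrow> red (x @ y) = red (y @ x)"
proof -
  assume z: "red (x @ y @ ng x @ ng y) = []"
  have "red (x @ y) = red ((x @ y) @ ng x @ x @ [])" using red_cancel_ng'[of "x @ y" x "[]"] by simp
  also have "\<dots> = red ((x @ y @ ng x) @ ng y @ y @ x)" using red_cancel_ng'[of "x @ y @ ng x" y x] by simp
  also have "\<dots> = red (red (x @ y @ ng x @ ng y) @ y @ x)" by (simp add: red_red_append)
  also have "\<dots> = red (y @ x)" using z by simp
  finally show ?thesis .
qed

lemma comm_zero: "red x = [] \<or> red y = [] \<Longrightarrow> red (x @ y @ ng x @ ng y) = []"
proof (elim disjE)
  assume z: "red x = []"
  have "red (x @ y @ ng x @ ng y) = red (y @ ng x @ ng y)" by (metis red_red_append z append_Nil)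
  also have "\<dots> = red (y @ [] @ ng y)" using red_cong[of "ng x" "[]" y "ng y"] zero_ng[OF z] by simp
  also have "\<dots> = []" using red_cancel_ng[of "[]" y "[]"] by simp
  finally show ?thesis .
next
  assume z: "red y = []"
  have "red (x @ y @ ng x @ ng y) = red (x @ [] @ ng x @ ng y)" using red_cong[of y "[]" x "ng x @ ng y"] z by simp
  also have "\<dots> = red (ng y)" using red_cancel_ng[of "[]" x "ng y"] by simp
  also have "\<dots> = []" using zero_ng[OF z] .
  finally show ?thesis .
qed

lemma pw_cong: "red d = red d' \<Longrightarrow> red (pw d n) = red (pw d' n)"
proof (induction n)
  case (Suc n)
  have "red (pw d (Suc n)) = red (d @ red (pw d n))" by (simp add: pw_Suc red_append_red)
  also have "\<dots> = red (d @ pw d' n)" using Suc by (simp add: red_append_red)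
  also have "\<dots> = red (red d' @ pw d' n)" using Suc.prems red_red_append[of d "pw d' n"] by simp
  also have "\<dots> = red (pw d' (Suc n))" by (simp add: pw_Suc red_red_append)
  finally show ?case .
qed simp

lemma zp_cong: "red d = red d' \<Longrightarrow> red (zp d i) = red (zp d' i)"
proof -
  assume e: "red d = red d'"
  have "red (pw d n) = red (pw d' n)" for n using pw_cong[OF e] .
  moreover have "red (pw (ng d) n) = red (pw (ng d') n)" for n using pw_cong[OF red_ng_cong[OF e]] .
  ultimately show ?thesis by (simp add: zp_def)
qed

lemma pw_Nil: "pw [] n = []" by (simp add: pw_def)

lemma kill_root: "a \<noteq> 0 \<Longrightarrow> red (zp d a) = [] \<Longrightarrow> red (zp d b) = []"
proof -
  assume a: "a \<noteq> 0" and z: "red (zp d a) = []"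
  have "red d = []"
  proof (cases "a > 0")
    case True
    then have "red (pw (red d) (nat a)) = []" using z pw_cong[of "red d" d "nat a"] by (simp add: zp_def)
    moreover have "nat a > 0" using True by simp
    ultimately show ?thesis using torsion[OF reduced_red] by blast
  next
    case False
    then have "red (pw (red (ng d)) (nat (-a))) = []" using a z pw_cong[of "red (ng d)" "ng d" "nat (-a)"] by (simp add: zp_def)
    moreover have "nat (-a) > 0" using False a by simp
    ultimately have "red (ng d) = []" using torsion[OF reduced_red] by blast
    then show ?thesis using red_ng_cong[of "ng d" "[]"] by simp
  qed
  then have "red (zp d b) = red (zp [] b)" using zp_cong[of d "[]"] by simp
  then show ?thesis by (simp add: zp_def pw_Nil)
qed

lemma outc: "(o1::outcome) \<noteq> fall \<longleftrightarrow> o1 = hang" by (cases o1) auto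

lemma word_on_ng: "fg_word_on V w \<Longrightarrow> fg_word_on V (ng w)"
  by (auto simp: fg_word_on_def fg_neg_def)

lemma main1:
  assumes s1: "solves V h1 g1" and s2: "solves V h2 g2"
    and hyp: "\<forall>S. S \<subseteq> V \<and> g1 S = hang \<and> g2 S = hang \<longrightarrow>
         (\<exists>S'. S \<subseteq> S' \<and> S' \<subseteq> V \<and> g1 S' \<noteq> g2 S')"
  shows "solves V (fg_plus h1 h2) (spec_and g1 g2) \<and> solves V (fg_comm h1 h2) (spec_or g1 g2)"
proof -
  have Z1: "\<And>S. S \<subseteq> V \<Longrightarrow> red (kl S h1) = [] \<longleftrightarrow> g1 S = fall" using s1 by (simp add: solves_def fg_is_zero_def)
  have Z2: "\<And>S. S \<subseteq> V \<Longrightarrow> red (kl S h2) = [] \<longleftrightarrow> g2 S = fall" using s2 by (simp add: solves_def fg_is_zero_def)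
  have w1: "fg_word_on V h1" and w2: "fg_word_on V h2" using s1 s2 by (simp_all add: solves_def)
  have and_part: "red (kl S h1 @ kl S h2) = [] \<longleftrightarrow> (g1 S = fall \<and> g2 S = fall)" if S: "S \<subseteq> V" for S
  proof
    assume z: "red (kl S h1 @ kl S h2) = []"
    show "g1 S = fall \<and> g2 S = fall"
    proof (rule ccontr)
      assume n: "\<not> (g1 S = fall \<and> g2 S = fall)"
      have "(g1 S = fall) = (g2 S = fall)" using zero_app_iff[OF z] Z1[OF S] Z2[OF S] by blast
      then have "g1 S = hang \<and> g2 S = hang" using n by (cases "g1 S"; cases "g2 S") auto
      then have "\<exists>S'. S \<subseteq> S' \<and> S' \<subseteq> V \<and> g1 S' \<noteq> g2 S'" using mp[OF spec[OF hyp, of S]] S by simp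
      then obtain S' where S': "S \<subseteq> S'" "S' \<subseteq> V" "g1 S' \<noteq> g2 S'" by blast
      have "red (kl S' (kl S h1 @ kl S h2)) = red (kl S' [])" proof -
        have "red (kl S h1 @ kl S h2) = red []" using z by simp
        then show ?thesis by (rule red_kl_cong)
      qed
      then have "red (kl S' h1 @ kl S' h2) = []" using kl_kl[OF S'(1)] by simp
      then have "g1 S' = fall \<longleftrightarrow> g2 S' = fall" using zero_app_iff[of "kl S' h1" "kl S' h2"] Z1[OF S'(2)] Z2[OF S'(2)] by blast
      then show False using S'(3) by (cases "g1 S'"; cases "g2 S'") auto
    qed
  next
    assume "g1 S = fall \<and> g2 S = fall"
    then show "red (kl S h1 @ kl S h2) = []" using Z1[OF S] Z2[OF S] zero_app by blast
  qed
  have or_part: "red (kl S h1 @ kl S h2 @ ng (kl S h1) @ ng (kl S h2)) = [] \<longleftrightarrow> (g1 S = fall \<or> g2 S = fall)" if S: "S \<subseteq> V" for S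
  proof
    define x where "x = kl S h1"
    define y where "y = kl S h2"
    assume z: "red (kl S h1 @ kl S h2 @ ng (kl S h1) @ ng (kl S h2)) = []"
    show "g1 S = fall \<or> g2 S = fall"
    proof (rule ccontr)
      assume n: "\<not> (g1 S = fall \<or> g2 S = fall)"
      then have h: "g1 S = hang \<and> g2 S = hang" by (cases "g1 S"; cases "g2 S") auto
      then have xn: "red x \<noteq> []" and yn: "red y \<noteq> []" using Z1[OF S] Z2[OF S] x_def y_def by auto
      have "\<exists>S'. S \<subseteq> S' \<and> S' \<subseteq> V \<and> g1 S' \<noteq> g2 S'" using mp[OF spec[OF hyp, of S]] S h by simp
      then obtain S' where S': "S \<subseteq> S'" "S' \<subseteq> V" "g1 S' \<noteq> g2 S'" by blast
      have cm: "red (x @ y) = red (y @ x)" using comm_of_zero z unfolding x_def y_def by blast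
      have "red (red x @ red y) = red (red y @ red x)" using cm by (simp add: red_red_append red_append_red)
      then obtain c a b where r: "red (red x) = red (zp c a)" "red (red y) = red (zp c b)"
        using comm_root[OF reduced_red reduced_red] by blast
      have a0: "a \<noteq> 0" using r(1) xn by auto
      have b0: "b \<noteq> 0" using r(2) yn by auto
      have k1: "red (kl S' h1) = red (zp (kl S' c) a)"
      proof -
        have "red (kl S' h1) = red (kl S' x)" using kl_kl[OF S'(1)] x_def by simp
        also have "\<dots> = red (kl S' (red x))" by (simp add: red_kl)
        also have "\<dots> = red (kl S' (zp c a))" using r(1) red_kl by (metis red_red)
        finally show ?thesis by (simp add: kl_zp)
      qed
      have k2: "red (kl S' h2) = red (zp (kl S' c) b)"
      proof -
        have "red (kl S' h2) = red (kl S' y)" using kl_kl[OF S'(1)] y_def by simp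
        also have "\<dots> = red (kl S' (red y))" by (simp add: red_kl)
        also have "\<dots> = red (kl S' (zp c b))" using r(2) red_kl by (metis red_red)
        finally show ?thesis by (simp add: kl_zp)
      qed
      have "g1 S' = fall \<longleftrightarrow> g2 S' = fall"
      proof
        assume "g1 S' = fall"
        then have "red (zp (kl S' c) a) = []" using Z1[OF S'(2)] k1 by simp
        then have "red (zp (kl S' c) b) = []" using kill_root[OF a0] by blast
        then show "g2 S' = fall" using Z2[OF S'(2)] k2 by simp
      next
        assume "g2 S' = fall"
        then have "red (zp (kl S' c) b) = []" using Z2[OF S'(2)] k2 by simp
        then have "red (zp (kl S' c) a) = []" using kill_root[OF b0] by blast
        then show "g1 S' = fall" using Z1[OF S'(2)] k1 by simp
      qed
      then show False using S'(3) by (cases "g1 S'"; cases "g2 S'") auto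
    qed
  next
    assume "g1 S = fall \<or> g2 S = fall"
    then show "red (kl S h1 @ kl S h2 @ ng (kl S h1) @ ng (kl S h2)) = []"
      using Z1[OF S] Z2[OF S] comm_zero by blast
  qed
  show ?thesis
    unfolding solves_def
  proof (intro conjI allI impI)
    show "fg_word_on V (fg_plus h1 h2)" using w1 w2 by (auto simp: fg_word_on_def fg_plus_def)
    show "fg_word_on V (fg_comm h1 h2)" using w1 w2 word_on_ng[OF w1] word_on_ng[OF w2]
      by (auto simp: fg_word_on_def fg_plus_def fg_comm_def)
  next
    fix S assume S: "S \<subseteq> V"
    show "fg_is_zero (kl S (fg_plus h1 h2)) = (spec_and g1 g2 S = fall)"
      using and_part[OF S] by (simp add: fg_is_zero_def fg_plus_def spec_and_def)
    show "fg_is_zero (kl S (fg_comm h1 h2)) = (spec_or g1 g2 S = fall)"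
      using or_part[OF S] by (simp add: fg_is_zero_def fg_plus_def fg_comm_def spec_or_def)
  qed
qed

theorem lemma2:
  fixes V :: "'a set"
  assumes "finite V"
  shows
  "(\<forall>g1 g2 h1 h2.
      is_spec V g1 \<and> is_spec V g2 \<and> solves V h1 g1 \<and> solves V h2 g2 \<and>
      (\<forall>S. S \<subseteq> V \<and> g1 S = hang \<and> g2 S = hang \<longrightarrow>
         (\<exists>S'. S \<subseteq> S' \<and> S' \<subseteq> V \<and> g1 S' \<noteq> g2 S'))
    \<longrightarrow> solves V (fg_plus h1 h2) (spec_and g1 g2) \<and>
        solves V (fg_comm h1 h2) (spec_or g1 g2))
   \<and>
   (\<forall>V1 V2 f1 f2.
      V = V1 \<union> V2 \<and> V1 \<inter> V2 = {} \<and> is_spec V1 f1 \<and> is_spec V2 f2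
    \<longrightarrow> (\<forall>S. S \<subseteq> V \<and> f1 (S \<inter> V1) = hang \<and> f2 (S \<inter> V2) = hang \<longrightarrow>
          (\<exists>S'. S \<subseteq> S' \<and> S' \<subseteq> V \<and> f1 (S' \<inter> V1) \<noteq> f2 (S' \<inter> V2))))"
proof (rule conjI, goal_cases)
  case 1
  show ?case
  proof (intro allI impI)
  fix g1 g2 h1 h2
  assume H: "is_spec V g1 \<and> is_spec V g2 \<and> solves V h1 g1 \<and> solves V h2 g2 \<and>
      (\<forall>S. S \<subseteq> V \<and> g1 S = hang \<and> g2 S = hang \<longrightarrow>
         (\<exists>S'. S \<subseteq> S' \<and> S' \<subseteq> V \<and> g1 S' \<noteq> g2 S'))"
  show "solves V (fg_plus h1 h2) (spec_and g1 g2) \<and> solves V (fg_comm h1 h2) (spec_or g1 g2)"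
    by (rule main1[OF H[THEN conjunct2, THEN conjunct2, THEN conjunct1]
        H[THEN conjunct2, THEN conjunct2, THEN conjunct2, THEN conjunct1]
        H[THEN conjunct2, THEN conjunct2, THEN conjunct2, THEN conjunct2]])
  qed
next
  case 2
  show ?case
  proof (intro allI impI)
  fix V1 V2 f1 f2 S
  assume A: "V = V1 \<union> V2 \<and> V1 \<inter> V2 = {} \<and> is_spec V1 f1 \<and> is_spec V2 f2"
    and B: "S \<subseteq> V \<and> f1 (S \<inter> V1) = hang \<and> f2 (S \<inter> V2) = hang"
  have e1: "(S \<union> V1) \<inter> V1 = V1" by auto
  have e2: "(S \<union> V1) \<inter> V2 = S \<inter> V2" using A by auto
  have "f1 V1 = fall" using A by (simp add: is_spec_def)
  then show "\<exists>S'. S \<subseteq> S' \<and> S' \<subseteq> V \<and> f1 (S' \<inter> V1) \<noteq> f2 (S' \<inter> V2)"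
    using A B e1 e2 by (rule_tac x="S \<union> V1" in exI) auto
  qed
qed

end
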